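(* Let $P$ be a finite $(3+1)$-free poset and let $\mathsf a=a_{n+1}a_n\cdots a_1$ and $\mathsf b=b_nb_{n-1}\cdots b_1$ be $P$-strictly decreasing words such that (i) $a_i\sim_Pb_i$ for all $i\in[n]$; (ii) $a_{i+1}\sim_Pb_i$ for all $i\in[n]$; (iii) $a_i<_Pb_{i+1}$ for all $i\in[n-1]$; (iv) $b_i<_Pa_{i+2}$ for all $i\in[n-1]$. Then $\mathbf{u}_{\mathsf a}\mathbf{u}_{\mathsf b}\equiv\mathbf{u}_{\mathsf b}\mathbf{u}_{\mathsf a}\pmod{I^P_{\mathrm{plac}}}$.
   Context: $a<_Pb$: strict order; $a\sim_Pb$: incomparable or equal. A word $w_1\cdots w_m$ is $P$-strictly decreasing if $w_1>_P\cdots>_Pw_m$. $\mathcal{U}_P=\mathbb{Z}\langle u_a:a\in P\rangle$, $\mathbf{u}_w=u_{w_1}\cdots u_{w_m}$. $I^P_{\mathrm{plac}}$ is the two-sided ideal generated by: $u_bu_au_c-u_bu_cu_a$ when $a<_Pb$, $c\not<_Pb$, $a<_Pc$; $u_cu_au_b-u_au_cu_b$ when $b\not<_Pa$, $b<_Pc$, $a<_Pc$; $u_cu_au_b-u_bu_cu_a$ when $a\sim_Pb$, $b\sim_Pc$, $a<_Pc$. *)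

theory Defs
  imports Main
begin

text \<open>The free associative algebra Z<u_a : a in P> is modelled as functions from words
  (lists over P) to int; only finitely supported functions are polynomials.\<close>

type_synonym 'a ncpoly = "'a list \<Rightarrow> int"

definition ncmul :: "'a ncpoly \<Rightarrow> 'a ncpoly \<Rightarrow> 'a ncpoly" where
  "ncmul f g = (\<lambda>w. \<Sum>i\<le>length w. f (take i w) * g (drop i w))"

definition ncmon :: "'a list \<Rightarrow> 'a ncpoly" where
  "ncmon w = (\<lambda>v. if v = w then 1 else 0)"

definition fin_supp :: "'a ncpoly \<Rightarrow> bool" where
  "fin_supp f \<longleftrightarrow> finite {w. f w \<noteq> 0}"

inductive_set two_sided_ideal :: "'a ncpoly set \<Rightarrow> 'a ncpoly set" for G where
  gen: "g \<in> G \<Longrightarrow> g \<in> two_sided_ideal G"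
| zero: "(\<lambda>_. 0) \<in> two_sided_ideal G"
| add: "f \<in> two_sided_ideal G \<Longrightarrow> g \<in> two_sided_ideal G \<Longrightarrow> (\<lambda>w. f w + g w) \<in> two_sided_ideal G"
| neg: "f \<in> two_sided_ideal G \<Longrightarrow> (\<lambda>w. - f w) \<in> two_sided_ideal G"
| mult: "f \<in> two_sided_ideal G \<Longrightarrow> fin_supp r \<Longrightarrow> fin_supp s \<Longrightarrow>
          ncmul (ncmul r f) s \<in> two_sided_ideal G"

definition sim_P :: "'a::order \<Rightarrow> 'a \<Rightarrow> bool" where
  "sim_P a b \<longleftrightarrow> \<not> a < b \<and> \<not> b < a"

definition plac_gens :: "('a::order) ncpoly set" where
  "plac_gens =
     {(\<lambda>w. ncmon [b,a,c] w - ncmon [b,c,a] w) | a b c. a < b \<and> \<not> c < b \<and> a < c}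
   \<union> {(\<lambda>w. ncmon [c,a,b] w - ncmon [a,c,b] w) | a b c. \<not> b < a \<and> b < c \<and> a < c}
   \<union> {(\<lambda>w. ncmon [c,a,b] w - ncmon [b,c,a] w) | a b c. sim_P a b \<and> sim_P b c \<and> a < c}"

definition I_plac :: "('a::order) ncpoly set" where
  "I_plac = two_sided_ideal plac_gens"

definition three_one_free :: "'a::order itself \<Rightarrow> bool" where
  "three_one_free _ \<longleftrightarrow> \<not> (\<exists>x y z d::'a. x < y \<and> y < z \<and>
        \<not> (d \<le> x) \<and> \<not> (x \<le> d) \<and> \<not> (d \<le> y) \<and> \<not> (y \<le> d) \<and> \<not> (d \<le> z) \<and> \<not> (z \<le> d))"

definition strictly_decreasing :: "('a::order) list \<Rightarrow> bool" where
  "strictly_decreasing w \<longleftrightarrow> sorted_wrt (>) w"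

end

theory Submission
  imports Defs
begin

definition eqv :: "('a::order) list \<Rightarrow> 'a list \<Rightarrow> bool" where
  "eqv w w' \<longleftrightarrow> (\<lambda>v. ncmon w v - ncmon w' v) \<in> I_plac"

lemma ncmul_diff_right:
  "ncmul r (\<lambda>v. f v - g v) = (\<lambda>v. ncmul r f v - ncmul r g v)"
  unfolding ncmul_def by (simp add: sum_subtractf right_diff_distrib)

lemma ncmul_diff_left:
  "ncmul (\<lambda>v. f v - g v) s = (\<lambda>v. ncmul f s v - ncmul g s v)"
  unfolding ncmul_def by (simp add: sum_subtractf left_diff_distrib)

lemma take_drop_iff:
  assumes "i \<le> length v"
  shows "(take i v = x \<and> drop i v = w) \<longleftrightarrow> (i = length x \<and> v = x @ w)"
proof
  assume h: "take i v = x \<and> drop i v = w"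
  then have "v = x @ w" using append_take_drop_id[of i v] by simp
  moreover have "length x = i" using h assms by auto
  ultimately show "i = length x \<and> v = x @ w" by simp
next
  assume "i = length x \<and> v = x @ w"
  then show "take i v = x \<and> drop i v = w" by simp
qed

lemma ncmul_mon: "ncmul (ncmon x) (ncmon w) = ncmon (x @ w)"
proof
  fix v :: "'a list"
  have "\<And>i. i \<le> length v \<Longrightarrow> (if take i v = x then 1 else 0) * (if drop i v = w then 1 else (0::int))
        = (if i = length x then (if v = x @ w then 1 else 0) else 0)"
  proof -
    fix i assume i: "i \<le> length v"
    show "(if take i v = x then 1 else 0) * (if drop i v = w then 1 else (0::int))
        = (if i = length x then (if v = x @ w then 1 else 0) else 0)"
    proof -
      have "(if take i v = x then 1 else 0) * (if drop i v = w then 1 else (0::int))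
          = (if take i v = x \<and> drop i v = w then 1 else 0)" by simp
      also have "\<dots> = (if i = length x \<and> v = x @ w then 1 else 0)"
        unfolding take_drop_iff[OF i, of x w] ..
      also have "\<dots> = (if i = length x then (if v = x @ w then 1 else 0) else 0)" by simp
      finally show ?thesis .
    qed
  qed
  then have "ncmul (ncmon x) (ncmon w) v
      = (\<Sum>i\<le>length v. (if i = length x then (if v = x @ w then 1 else 0) else 0))"
    unfolding ncmul_def ncmon_def by (intro sum.cong) auto
  also have "\<dots> = ncmon (x @ w) v"
    unfolding ncmon_def by (auto simp: sum.delta')
  finally show "ncmul (ncmon x) (ncmon w) v = ncmon (x @ w) v" .
qed

lemma fin_supp_mon: "fin_supp (ncmon x)"
proof -
  have "{w. ncmon x w \<noteq> 0} = {x}" by (auto simp: ncmon_def)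
  then show ?thesis unfolding fin_supp_def by simp
qed

lemma eqv_refl: "eqv w w"
proof -
  have "(\<lambda>v. ncmon w v - ncmon w v) = (\<lambda>_. 0)" by simp
  then show ?thesis unfolding eqv_def I_plac_def using two_sided_ideal.zero by metis
qed

lemma eqv_trans: "eqv u v \<Longrightarrow> eqv v w \<Longrightarrow> eqv u w"
proof -
  assume "eqv u v" "eqv v w"
  then have "(\<lambda>x. (ncmon u x - ncmon v x) + (ncmon v x - ncmon w x)) \<in> I_plac"
    unfolding eqv_def I_plac_def by (rule two_sided_ideal.add)
  then show ?thesis unfolding eqv_def by simp
qed

lemma eqv_cong: "eqv w w' \<Longrightarrow> eqv (x @ w @ y) (x @ w' @ y)"
proof -
  assume "eqv w w'"
  then have "ncmul (ncmul (ncmon x) (\<lambda>v. ncmon w v - ncmon w' v)) (ncmon y) \<in> I_plac"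
    unfolding eqv_def I_plac_def by (rule two_sided_ideal.mult[OF _ fin_supp_mon fin_supp_mon])
  then show ?thesis
    unfolding eqv_def ncmul_diff_right ncmul_mon ncmul_diff_left append_assoc .
qed

lemma eqv_gen: "(\<lambda>v. ncmon w v - ncmon w' v) \<in> plac_gens \<Longrightarrow> eqv w w'"
  unfolding eqv_def I_plac_def by (rule two_sided_ideal.gen)

lemma R1: "a < b \<Longrightarrow> \<not> c < b \<Longrightarrow> a < c \<Longrightarrow> eqv [b,a,c] [b,c,a]"
  apply (rule eqv_gen, unfold plac_gens_def, rule UnI1, rule UnI1, rule CollectI)
  apply (rule exI[where x=a], rule exI[where x=b], rule exI[where x=c])
  by simp

lemma R2: "\<not> b < a \<Longrightarrow> b < c \<Longrightarrow> a < c \<Longrightarrow> eqv [c,a,b] [a,c,b]"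
  apply (rule eqv_gen, unfold plac_gens_def, rule UnI1, rule UnI2, rule CollectI)
  apply (rule exI[where x=a], rule exI[where x=b], rule exI[where x=c])
  by simp

lemma R3: "sim_P a b \<Longrightarrow> sim_P b c \<Longrightarrow> a < c \<Longrightarrow> eqv [c,a,b] [b,c,a]"
  apply (rule eqv_gen, unfold plac_gens_def, rule UnI2, rule CollectI)
  apply (rule exI[where x=a], rule exI[where x=b], rule exI[where x=c])
  by simp

lemma P1:
  fixes h y :: "'a::order"
  shows "sorted_wrt (>) (h # xs) \<Longrightarrow> \<forall>x\<in>set xs. x < y \<Longrightarrow> \<not> y < h
         \<Longrightarrow> eqv (h # xs @ [y]) (h # y # xs)"
proof (induction xs arbitrary: h)
  case Nil
  then show ?case by (simp add: eqv_refl)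
next
  case (Cons x xs)
  have "x < y" using Cons.prems by simp
  then have "\<not> y < x" by auto
  then have "eqv (x # xs @ [y]) (x # y # xs)" using Cons by simp
  from eqv_cong[OF this, of "[h]" "[]"] have e1: "eqv (h # x # xs @ [y]) (h # x # y # xs)" by simp
  have "x < h" using Cons.prems by simp
  then have "eqv [h, x, y] [h, y, x]" using R1 \<open>x < y\<close> Cons.prems(3) by blast
  from eqv_cong[OF this, of "[]" xs] have e2: "eqv (h # x # y # xs) (h # y # x # xs)" by simp
  show ?case using eqv_trans[OF e1 e2] by simp
qed

lemma P3:
  fixes t y :: "'a::order"
  shows "sorted_wrt (>) (zs @ [t]) \<Longrightarrow> \<forall>z\<in>set zs. y < z \<Longrightarrow> \<not> t < y
         \<Longrightarrow> eqv (zs @ [y, t]) (y # zs @ [t])"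
proof (induction zs arbitrary: t rule: rev_induct)
  case Nil
  then show ?case by (simp add: eqv_refl)
next
  case (snoc z zs)
  have yz: "y < z" using snoc.prems by simp
  have tz: "t < z" using snoc.prems by (simp add: sorted_wrt_append)
  have "eqv [z, y, t] [y, z, t]" using R2 snoc.prems(3) tz yz by blast
  from eqv_cong[OF this, of zs "[]"] have e1: "eqv (zs @ [z, y, t]) (zs @ [y, z, t])" by simp
  have "\<not> z < y" using yz by auto
  moreover have "sorted_wrt (>) (zs @ [z])" using snoc.prems(1) by (simp add: sorted_wrt_append)
  ultimately have "eqv (zs @ [y, z]) (y # zs @ [z])" using snoc by simp
  from eqv_cong[OF this, of "[]" "[t]"] have e2: "eqv (zs @ [y, z, t]) (y # zs @ [z, t])" by simp
  show ?case using eqv_trans[OF e1 e2] by simp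
qed

lemma G:
  fixes t u y :: "'a::order"
  assumes "sorted_wrt (>) (zs @ t # u # xs)"
    and "\<forall>z\<in>set zs. y < z" and "\<forall>x\<in>set xs. x < y"
    and "sim_P t y" and "sim_P u y"
  shows "eqv ((zs @ t # u # xs) @ [y]) (y # zs @ t # u # xs)"
proof -
  have s1: "sorted_wrt (>) (u # xs)" using assms(1) by (simp add: sorted_wrt_append)
  have "\<not> y < u" using assms(5) by (simp add: sim_P_def)
  then have "eqv (u # xs @ [y]) (u # y # xs)" using P1 s1 assms(3) by blast
  from eqv_cong[OF this, of "zs @ [t]" "[]"] have e1: "eqv (zs @ t # u # xs @ [y]) (zs @ t # u # y # xs)" by simp
  have ut: "u < t" using assms(1) by (simp add: sorted_wrt_append)
  have "eqv [t, u, y] [y, t, u]"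
    using R3[of u y t] assms(4,5) ut by (simp add: sim_P_def)
  from eqv_cong[OF this, of zs xs] have e2: "eqv (zs @ t # u # y # xs) (zs @ y # t # u # xs)" by simp
  have "sorted_wrt (>) (zs @ [t])" using assms(1) by (simp add: sorted_wrt_append)
  moreover have "\<not> t < y" using assms(4) by (simp add: sim_P_def)
  ultimately have "eqv (zs @ [y, t]) (y # zs @ [t])" using P3 assms(2) by blast
  from eqv_cong[OF this, of "[]" "u # xs"] have e3: "eqv (zs @ y # t # u # xs) (y # zs @ t # u # xs)" by simp
  show ?thesis using eqv_trans[OF eqv_trans[OF e1 e2] e3] by simp
qed

lemma commute_all:
  "\<forall>y\<in>set B. eqv (A @ [y]) (y # A) \<Longrightarrow> eqv (A @ B) (B @ A)"
proof (induction B)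
  case Nil
  then show ?case by (simp add: eqv_refl)
next
  case (Cons y B)
  have "eqv (A @ [y]) (y # A)" using Cons.prems by simp
  from eqv_cong[OF this, of "[]" B] have e1: "eqv (A @ y # B) (y # A @ B)" by simp
  have "eqv (A @ B) (B @ A)" using Cons by simp
  from eqv_cong[OF this, of "[y]" "[]"] have e2: "eqv (y # A @ B) (y # B @ A)" by simp
  show ?case using eqv_trans[OF e1 e2] by simp
qed



theorem mainTheorem15:
  fixes a b :: "nat \<Rightarrow> 'a::order" and n :: nat
  assumes "finite (UNIV :: 'a set)"
    and "three_one_free TYPE('a)"
    and "strictly_decreasing (map a (rev [1..<n+2]))"
    and "strictly_decreasing (map b (rev [1..<n+1]))"
    and "\<forall>i\<in>{1..n}. sim_P (a i) (b i)"
    and "\<forall>i\<in>{1..n}. sim_P (a (i+1)) (b i)"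
    and "\<forall>i\<in>{1..n-1}. a i < b (i+1)"
    and "\<forall>i\<in>{1..n-1}. b i < a (i+2)"
  shows "(\<lambda>w. ncmul (ncmon (map a (rev [1..<n+2]))) (ncmon (map b (rev [1..<n+1]))) w
             - ncmul (ncmon (map b (rev [1..<n+1]))) (ncmon (map a (rev [1..<n+2]))) w)
         \<in> I_plac"
proof -
  define A where "A = map a (rev [1..<n+2])"
  define B where "B = map b (rev [1..<n+1])"
  have sA: "sorted_wrt (>) A" using assms(3) unfolding A_def strictly_decreasing_def .
  have mono: "a i < a j" if "1 \<le> i" "i < j" "j \<le> n+1" for i j
  proof -
    have "sorted_wrt (\<lambda>x y. a x < a y) [1..<n+2]"
      using sA unfolding A_def by (simp del: upt_Suc add: sorted_wrt_map sorted_wrt_rev)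
    then have "\<forall>p q. p < q \<longrightarrow> q < length [1..<n+2] \<longrightarrow> a ([1..<n+2] ! p) < a ([1..<n+2] ! q)"
      by (simp only: sorted_wrt_iff_nth_less)
    then have H: "a ([1..<n+2] ! (i-1)) < a ([1..<n+2] ! (j-1))"
      using that by (simp only: length_upt)
    have "[1..<n+2] ! (i-1) = i" "[1..<n+2] ! (j-1) = j" using that by (simp_all del: upt_Suc)
    with H show ?thesis by simp
  qed
  have mono': "a i \<le> a j" if "1 \<le> i" "i \<le> j" "j \<le> n+1" for i j
    using mono[of i j] that by (cases "i = j") auto
  have "\<forall>y\<in>set B. eqv (A @ [y]) (y # A)"
  proof
    fix y assume "y \<in> set B"
    then obtain i where i: "1 \<le> i" "i \<le> n" "y = b i" unfolding B_def by auto
    have "[1..<n+2] = [1..<i] @ [i..<n+2]"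
      using upt_add_eq_append[of 1 i "n+2-i"] i by simp
    also have "[i..<n+2] = i # (i+1) # [i+2..<n+2]"
      using i by (simp add: upt_conv_Cons)
    finally have "rev [1..<n+2] = rev [i+2..<n+2] @ (i+1) # i # rev [1..<i]" by simp
    then have Aeq: "A = map a (rev [i+2..<n+2]) @ a (i+1) # a i # map a (rev [1..<i])"
      unfolding A_def by simp
    have zs: "\<forall>z\<in>set (map a (rev [i+2..<n+2])). y < z"
    proof
      fix z assume "z \<in> set (map a (rev [i+2..<n+2]))"
      then obtain j where j: "i+2 \<le> j" "j \<le> n+1" "z = a j" by auto
      have "b i < a (i+2)" using assms(8) i j by auto
      also have "a (i+2) \<le> a j" using mono' j by simp
      finally show "y < z" using i j by simp
    qed
    have xs: "\<forall>x\<in>set (map a (rev [1..<i])). x < y"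
    proof
      fix x assume "x \<in> set (map a (rev [1..<i]))"
      then obtain j where j: "1 \<le> j" "j < i" "x = a j" by auto
      have "i - 1 \<in> {1..n-1}" using i j by auto
      then have "a (i-1) < b (i - 1 + 1)" using assms(7) by blast
      then have lt: "a (i-1) < b i" using j by simp
      have "a j \<le> a (i - 1)" using mono' j i by simp
      also note lt
      finally show "x < y" using i j by simp
    qed
    have s1: "sim_P (a (i+1)) y" and s2: "sim_P (a i) y" using assms(5,6) i by auto
    have sA': "sorted_wrt (>) (map a (rev [i+2..<n+2]) @ a (i+1) # a i # map a (rev [1..<i]))"
      using sA unfolding Aeq .
    show "eqv (A @ [y]) (y # A)"
      unfolding Aeq by (rule G[OF sA' zs xs s1 s2])
  qed
  then have "eqv (A @ B) (B @ A)" by (rule commute_all)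
  then have "(\<lambda>w. ncmul (ncmon A) (ncmon B) w - ncmul (ncmon B) (ncmon A) w) \<in> I_plac"
    unfolding eqv_def ncmul_mon .
  then show ?thesis unfolding A_def B_def .
qed

end
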